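(* Let $(\mathcal T_n)_{n\in\mathbb N_0}$ be a generalised preferential attachment tree with deterministic attachment function $f:\mathbb N_0\to(0,\infty)$, and assume that for some $\kappa>0$ and all $n\in\mathbb N_0$, \[\max_{i\le n}\frac{f(i)}{i+1}\le\kappa\frac{f(n)}{n+1}.\] Let $\mathcal M_n=\max_{u\in\mathcal T_n}\deg^+(u,\mathcal T_n)$. Then for every $\varepsilon>0$ there exists $r>0$ such that \[\mathbb P\big(\forall n\in\mathbb N:\ \mathcal M_n\,n^{-1/(2\kappa)}\ge r\big)\ge1-\varepsilon.\]
   Context: Generalised preferential attachment tree with deterministic $f:\mathbb N_0\to(0,\infty)$: $\mathcal T_0$ is a single node labelled $0$; given $\mathcal T_k$ (nodes $0,\dots,k$), choose a node $j$ with probability $f(\deg^+(j,\mathcal T_k))/\mathcal Z_k$, where $\mathcal Z_k=\sum_{j=0}^kf(\deg^+(j,\mathcal T_k))$, and add node $k+1$ with an edge directed from $j$ to $k+1$. $\deg^+(u,T)$ is the out-degree of $u$ in the directed tree $T$. *)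

theory Defs
  imports "HOL-Probability.Probability"
begin

text \<open>A tree T_k on nodes 0..k is encoded by the list ps of length k with
  ps ! i = parent of node i+1 (edge directed from ps ! i to i+1).\<close>

definition outdeg :: "nat list \<Rightarrow> nat \<Rightarrow> nat" where
  "outdeg ps u = length (filter (\<lambda>v. v = u) ps)"

definition pa_Z :: "(nat \<Rightarrow> real) \<Rightarrow> nat list \<Rightarrow> real" where
  "pa_Z f ps = (\<Sum>j\<le>length ps. f (outdeg ps j))"

text \<open>Inverse-transform sampling: given a uniform x in [0,1), choose node j
  with probability f(deg j)/Z.\<close>
definition pa_choose :: "(nat \<Rightarrow> real) \<Rightarrow> nat list \<Rightarrow> real \<Rightarrow> nat" where
  "pa_choose f ps x =
     (LEAST j. x < (\<Sum>i\<le>j. f (outdeg ps i)) / pa_Z f ps)"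

primrec pa_tree :: "(nat \<Rightarrow> real) \<Rightarrow> (nat \<Rightarrow> real) \<Rightarrow> nat \<Rightarrow> nat list" where
  "pa_tree f U 0 = []"
| "pa_tree f U (Suc k) = pa_tree f U k @ [pa_choose f (pa_tree f U k) (U k)]"

definition max_outdeg :: "(nat \<Rightarrow> real) \<Rightarrow> (nat \<Rightarrow> real) \<Rightarrow> nat \<Rightarrow> nat" where
  "max_outdeg f U n = Max ((\<lambda>u. outdeg (pa_tree f U n) u) ` {0..n})"

definition unif_seq :: "(nat \<Rightarrow> real) measure" where
  "unif_seq = PiM UNIV (\<lambda>_. uniform_measure lborel {0..<1::real})"

end

theory Submission
  imports Defs
begin


definition Sm :: "(nat \<Rightarrow> real) \<Rightarrow> nat list \<Rightarrow> nat \<Rightarrow> real" where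
  "Sm f ps j = (\<Sum>i<j. f (outdeg ps i))"

lemma Sm_mono: assumes "\<And>n. f n > 0" "i \<le> j" shows "Sm f ps i \<le> Sm f ps j"
  unfolding Sm_def using assms
  by (intro sum_mono2) (auto intro: less_imp_le)

lemma Z_Sm: "pa_Z f ps = Sm f ps (Suc (length ps))"
  unfolding pa_Z_def Sm_def by (simp add: lessThan_Suc_atMost)

lemma Z_pos: assumes "\<And>n. f n > 0" shows "pa_Z f ps > 0"
  unfolding pa_Z_def using assms by (intro sum_pos) auto

lemma choose_alt: "pa_choose f ps x = (LEAST j. x < Sm f ps (Suc j) / pa_Z f ps)"
  unfolding pa_choose_def Sm_def by (simp add: lessThan_Suc_atMost)

lemma choose_eq_iff:
  assumes fpos: "\<And>n. f n > 0" and x: "0 \<le> x" "x < 1"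
  shows "pa_choose f ps x = j \<longleftrightarrow>
     (j \<le> length ps \<and> Sm f ps j / pa_Z f ps \<le> x \<and> x < Sm f ps (Suc j) / pa_Z f ps)"
proof -
  define Z where "Z = pa_Z f ps"
  have Z: "Z > 0" using Z_pos[OF fpos] by (simp add: Z_def)
  define P where "P j \<longleftrightarrow> x < Sm f ps (Suc j) / Z" for j
  have mono: "P i \<Longrightarrow> i \<le> k \<Longrightarrow> P k" for i k
  proof -
    assume a: "P i" "i \<le> k"
    have "Sm f ps (Suc i) \<le> Sm f ps (Suc k)" using a(2) by (intro Sm_mono[OF fpos]) simp
    then have "Sm f ps (Suc i) / Z \<le> Sm f ps (Suc k) / Z" using Z by (simp add: divide_right_mono)
    then show "P k" using a(1) unfolding P_def by linarith
  qed
  have Pn: "P (length ps)" unfolding P_def using Z x by (simp add: Z_def Z_Sm)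
  have ch: "pa_choose f ps x = (LEAST j. P j)" by (simp add: choose_alt P_def Z_def)
  have le: "(LEAST j. P j) \<le> length ps" by (rule Least_le[of P, OF Pn])
  show ?thesis
  proof
    assume h: "pa_choose f ps x = j"
    have "P j" using LeastI[of P, OF Pn] h ch by simp
    moreover have "Sm f ps j / Z \<le> x"
    proof (cases j)
      case 0 then show ?thesis using x by (simp add: Sm_def)
    next
      case (Suc i)
      have "\<not> P i" using not_less_Least[of i P] h ch Suc by simp
      then show ?thesis using Suc by (simp add: P_def)
    qed
    ultimately show "j \<le> length ps \<and> Sm f ps j / pa_Z f ps \<le> x \<and> x < Sm f ps (Suc j) / pa_Z f ps"
      using le h ch by (simp add: P_def Z_def)
  next
    assume h: "j \<le> length ps \<and> Sm f ps j / pa_Z f ps \<le> x \<and> x < Sm f ps (Suc j) / pa_Z f ps"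
    have "(LEAST j. P j) = j"
    proof (rule Least_equality)
      show "P j" using h by (simp add: P_def Z_def)
    next
      fix i assume "P i"
      show "j \<le> i"
      proof (rule ccontr)
        assume "\<not> j \<le> i"
        then have "Sm f ps (Suc i) \<le> Sm f ps j" by (intro Sm_mono[OF fpos]) simp
        then have "Sm f ps (Suc i) / Z \<le> Sm f ps j / Z" using Z by (simp add: divide_right_mono)
        then show False using \<open>P i\<close> h by (simp add: P_def Z_def)
      qed
    qed
    then show "pa_choose f ps x = j" using ch by simp
  qed
qed

lemma choose_le: assumes "\<And>n. f n > 0" "0 \<le> x" "x < 1" shows "pa_choose f ps x \<le> length ps"
  using choose_eq_iff[where f=f and ps=ps and j="pa_choose f ps x", OF assms] by simp

lemma choose_meas: "pa_choose f ps \<in> measurable borel (count_space UNIV)"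
  unfolding choose_alt by measurable


definition M0 :: "real measure" where "M0 = uniform_measure lborel {0..<1}"

lemma prob_M0: "prob_space M0"
  unfolding M0_def by (rule prob_space_uniform_measure) auto

lemma space_M0[simp]: "space M0 = UNIV" by (simp add: M0_def)

lemma sets_M0[simp]: "sets M0 = sets borel" by (simp add: M0_def)

lemma unif_seq_M0: "unif_seq = PiM UNIV (\<lambda>_. M0)" by (simp add: unif_seq_def M0_def)

lemma space_unif_seq[simp]: "space unif_seq = UNIV"
  by (simp add: unif_seq_M0 space_PiM)

lemma emeasure_M0: assumes "0 \<le> a" "a \<le> b" "b \<le> 1" shows "emeasure M0 {a..<b} = ennreal (b - a)"
proof -
  have "emeasure M0 {a..<b} = emeasure lborel ({0..<1} \<inter> {a..<b}) / emeasure lborel {0..<1::real}"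
    unfolding M0_def by (rule emeasure_uniform_measure) auto
  also have "{0..<1} \<inter> {a..<b} = {a..<b}" using assms by auto
  finally show ?thesis using assms by (simp add: divide_ennreal_def)
qed




lemma meas_M0: "measurable M0 N = measurable borel N" by (rule measurable_cong_sets) auto

lemma step_integral:
  fixes h :: "nat \<Rightarrow> ennreal"
  assumes fpos: "\<And>n. f n > 0"
  shows "(\<integral>\<^sup>+x. h (pa_choose f ps x) \<partial>M0) =
    (\<Sum>j\<le>length ps. ennreal (f (outdeg ps j) / pa_Z f ps) * h j)"
proof -
  define Z where "Z = pa_Z f ps"
  have Z: "Z > 0" using Z_pos[OF fpos] by (simp add: Z_def)
  define I where "I j = {Sm f ps j / Z ..< Sm f ps (Suc j) / Z}" for j
  have AE: "AE x in M0. x \<in> {0..<1}"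
    unfolding M0_def by (rule AE_uniform_measureI) auto
  have eq: "h (pa_choose f ps x) = (\<Sum>j\<le>length ps. h j * indicator (I j) x)"
    if x: "x \<in> {0..<1}" for x
  proof -
    define j0 where "j0 = pa_choose f ps x"
    have ind: "indicator (I j) x = (if j = j0 then 1 else (0::ennreal))" if "j \<le> length ps" for j
      using choose_eq_iff[where f=f and x=x and ps=ps and j=j, OF fpos] x that unfolding I_def j0_def Z_def
      by (auto simp: indicator_def)
    have "j0 \<le> length ps" using choose_le[where f=f and x=x and ps=ps, OF fpos] x by (simp add: j0_def)
    have "(\<Sum>j\<le>length ps. h j * indicator (I j) x) = (\<Sum>j\<le>length ps. if j = j0 then h j else 0)"
      by (intro sum.cong refl) (simp add: ind)
    also have "\<dots> = h j0" using \<open>j0 \<le> length ps\<close> by (simp add: sum.delta)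
    finally show ?thesis by (simp add: j0_def)
  qed
  have "(\<integral>\<^sup>+x. h (pa_choose f ps x) \<partial>M0) = (\<integral>\<^sup>+x. (\<Sum>j\<le>length ps. h j * indicator (I j) x) \<partial>M0)"
    by (rule nn_integral_cong_AE) (use AE eq in auto)
  also have "\<dots> = (\<Sum>j\<le>length ps. \<integral>\<^sup>+x. h j * indicator (I j) x \<partial>M0)"
    by (rule nn_integral_sum) (unfold meas_M0 I_def, measurable)
  also have "\<dots> = (\<Sum>j\<le>length ps. h j * emeasure M0 (I j))"
    by (intro sum.cong refl nn_integral_cmult_indicator) (auto simp: I_def)
  also have "\<dots> = (\<Sum>j\<le>length ps. ennreal (f (outdeg ps j) / pa_Z f ps) * h j)"
  proof (intro sum.cong refl)
    fix j assume j: "j \<in> {..length ps}"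
    have s0: "0 \<le> Sm f ps j" unfolding Sm_def using fpos by (intro sum_nonneg) (auto intro: less_imp_le)
    have s1: "Sm f ps j \<le> Sm f ps (Suc j)" by (rule Sm_mono[OF fpos]) simp
    have s2: "Sm f ps (Suc j) \<le> Z" unfolding Z_def Z_Sm using j by (intro Sm_mono[OF fpos]) simp
    have "emeasure M0 (I j) = ennreal (Sm f ps (Suc j) / Z - Sm f ps j / Z)"
      unfolding I_def using s0 s1 s2 Z
      by (intro emeasure_M0) (auto simp: divide_right_mono)
    also have "Sm f ps (Suc j) / Z - Sm f ps j / Z = f (outdeg ps j) / pa_Z f ps"
      by (simp add: Sm_def Z_def diff_divide_distrib[symmetric])
    finally show "h j * emeasure M0 (I j) = ennreal (f (outdeg ps j) / pa_Z f ps) * h j"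
      by (simp add: mult.commute)
  qed
  finally show ?thesis .
qed

lemma emeasure_shift:
  assumes meas: "{U. P (U 0) (\<lambda>i. U (Suc i))} \<in> sets unif_seq"
  shows "emeasure unif_seq {U. P (U 0) (\<lambda>i. U (Suc i))} =
    (\<integral>\<^sup>+x. emeasure unif_seq {U. P x U} \<partial>M0)"
proof -
  interpret S: sequence_space M0 by (simp add: sequence_space_def product_prob_space_def prob_M0 product_sigma_finite_def prob_space_imp_sigma_finite product_prob_space_axioms_def)
  interpret P: pair_sigma_finite M0 "\<Pi>\<^sub>M i::nat\<in>UNIV. M0" ..
  define A where "A = {U. P (U 0) (\<lambda>i. U (Suc i))}"
  have [measurable]: "A \<in> sets S.S" using meas by (simp add: A_def unif_seq_M0)
  have "emeasure unif_seq A = (\<integral>\<^sup>+U. indicator A U \<partial>S.S)"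
    by (simp add: unif_seq_M0)
  also have "\<dots> = (\<integral>\<^sup>+X. indicator A ((\<lambda>(s, \<omega>). case_nat s \<omega>) X) \<partial>(M0 \<Otimes>\<^sub>M S.S))"
    by (subst S.PiM_iter[symmetric]) (simp add: nn_integral_distr del: nn_integral_indicator)
  also have "\<dots> = (\<integral>\<^sup>+x. \<integral>\<^sup>+X. indicator A ((\<lambda>(s, \<omega>). case_nat s \<omega>) (x, X)) \<partial>S.S \<partial>M0)"
    by (subst S.nn_integral_fst) simp_all
  also have "\<dots> = (\<integral>\<^sup>+x. emeasure unif_seq {U. P x U} \<partial>M0)"
  proof (intro nn_integral_cong)
    fix x
    have "(\<lambda>X. indicator A ((\<lambda>(s, \<omega>). case_nat s \<omega>) (x, X))) = (indicator {U. P x U} :: _ \<Rightarrow> ennreal)"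
      by (auto simp: A_def indicator_def fun_eq_iff)
    moreover have "{U. P x U} \<in> sets S.S"
    proof -
      have "(\<lambda>X. case_nat x X) \<in> measurable S.S S.S" by measurable
      then have "(\<lambda>X. case_nat x X) -` A \<inter> space S.S \<in> sets S.S" by (rule measurable_sets) simp
      moreover have "(\<lambda>X. case_nat x X) -` A \<inter> space S.S = {U. P x U}"
        by (auto simp: A_def space_PiM)
      ultimately show ?thesis by simp
    qed
    ultimately show "(\<integral>\<^sup>+X. indicator A ((\<lambda>(s, \<omega>). case_nat s \<omega>) (x, X)) \<partial>S.S) = emeasure unif_seq {U. P x U}"
      by (simp add: unif_seq_M0)
  qed
  finally show ?thesis by (simp add: A_def)
qed




fun tf :: "(nat \<Rightarrow> real) \<Rightarrow> nat list \<Rightarrow> (nat \<Rightarrow> real) \<Rightarrow> nat \<Rightarrow> nat list" where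
  "tf f ps U 0 = ps"
| "tf f ps U (Suc k) = tf f (ps @ [pa_choose f ps (U 0)]) (\<lambda>i. U (Suc i)) k"

lemma tf_Suc': "tf f ps U (Suc k) = tf f ps U k @ [pa_choose f (tf f ps U k) (U k)]"
proof (induction k arbitrary: ps U)
  case 0 then show ?case by simp
next
  case (Suc k)
  show ?case by (subst tf.simps(2), subst Suc.IH) simp
qed

lemma pa_tree_tf: "pa_tree f U n = tf f [] U n"
  by (induction n) (simp_all del: tf.simps(2) add: tf_Suc')

lemma length_tf[simp]: "length (tf f ps U k) = length ps + k"
  by (induction k arbitrary: ps U) simp_all

lemma tf_meas: "(\<lambda>U. tf f ps U k) \<in> measurable unif_seq (count_space UNIV)"
proof (induction k)
  case 0 then show ?case by simp
next
  case (Suc k)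
  have c: "(\<lambda>U. q @ [pa_choose f q (U k)]) \<in> measurable unif_seq (count_space UNIV)" for q
  proof -
    have "(\<lambda>U. U k) \<in> measurable unif_seq M0"
      unfolding unif_seq_M0 by (rule measurable_component_singleton) simp
    then have "(\<lambda>U. U k) \<in> measurable unif_seq borel"
      using measurable_cong_sets[OF refl sets_M0, of unif_seq] by simp
    then have "(\<lambda>U. pa_choose f q (U k)) \<in> measurable unif_seq (count_space UNIV)"
      using choose_meas by (rule measurable_compose)
    then show ?thesis by (rule measurable_compose) simp
  qed
  show ?case unfolding tf_Suc'
    by (rule measurable_compose_countable[where f="\<lambda>q U. q @ [pa_choose f q (U k)]", OF c Suc.IH])
qed

lemma sets_tf: "{U. \<exists>m\<le>K. B (tf f ps U m)} \<in> sets unif_seq"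
proof -
  have "{U. \<exists>m\<le>K. B (tf f ps U m)} = (\<Union>m\<le>K. (\<lambda>U. tf f ps U m) -` {s. B s} \<inter> space unif_seq)"
    by auto
  also have "\<dots> \<in> sets unif_seq"
    by (intro sets.finite_UN ballI measurable_sets[OF tf_meas]) auto
  finally show ?thesis .
qed

definition valid :: "nat list \<Rightarrow> bool" where "valid ps \<longleftrightarrow> (\<forall>v\<in>set ps. v \<le> length ps)"

lemma valid_step: "\<lbrakk>\<And>n. f n > 0; valid ps; 0 \<le> x; x < 1\<rbrakk> \<Longrightarrow> valid (ps @ [pa_choose f ps x])"
  using choose_le[of f x ps] unfolding valid_def by fastforce

lemma outdeg_snoc: "outdeg (ps @ [j]) u = outdeg ps u + (if u = j then 1 else 0)"
  by (simp add: outdeg_def)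

lemma outdeg_Cons: "outdeg (a # ps) u = outdeg ps u + (if u = a then 1 else 0)"
  by (simp add: outdeg_def)

lemma sum_outdeg: "set ps \<subseteq> {..N} \<Longrightarrow> (\<Sum>j\<le>N. outdeg ps j) = length ps"
proof (induction ps)
  case Nil then show ?case by (simp add: outdeg_def)
next
  case (Cons a ps)
  then have "a \<le> N" "set ps \<subseteq> {..N}" by auto
  then show ?case using Cons.IH by (simp add: outdeg_Cons sum.distrib)
qed

definition Mx :: "nat list \<Rightarrow> nat" where "Mx ps = Max (outdeg ps ` {0..length ps})"

lemma outdeg_le_Mx: "u \<le> length ps \<Longrightarrow> outdeg ps u \<le> Mx ps"
  unfolding Mx_def by (intro Max_ge) auto

lemma Mx_in: "\<exists>u\<le>length ps. outdeg ps u = Mx ps"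
proof -
  have "Mx ps \<in> outdeg ps ` {0..length ps}" unfolding Mx_def by (intro Max_in) auto
  then show ?thesis by auto
qed

lemma Mx_snoc_ge: assumes "u \<le> length ps" shows "outdeg ps u + (if u = j then 1 else 0) \<le> Mx (ps @ [j])"
  using outdeg_le_Mx[of u "ps @ [j]"] assms by (simp add: outdeg_snoc)

lemma Mx_mono: "Mx ps \<le> Mx (ps @ [j])"
  using Mx_in[of ps] Mx_snoc_ge[of _ ps j] by (metis add_leD1)

lemma Mx_pos: assumes "valid ps" "length ps \<ge> 1" shows "Mx ps \<ge> 1"
proof (rule ccontr)
  assume "\<not> Mx ps \<ge> 1"
  then have "\<And>u. u \<le> length ps \<Longrightarrow> outdeg ps u = 0" using outdeg_le_Mx[of _ ps] by fastforce
  then have "(\<Sum>j\<le>length ps. outdeg ps j) = 0" by simp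
  moreover have "(\<Sum>j\<le>length ps. outdeg ps j) = length ps"
    using assms(1) by (intro sum_outdeg) (auto simp: valid_def)
  ultimately show False using assms(2) by simp
qed




fun cc :: "real \<Rightarrow> nat \<Rightarrow> real" where
  "cc k 0 = 1"
| "cc k (Suc n) = cc k n / (1 - 1 / (2 * k * (2 * real n + 1)))"

fun ph :: "nat \<Rightarrow> real" where
  "ph 0 = 1"
| "ph (Suc m) = ph m * (2 * real m + 1) / (2 * real m + 2)"

definition Y :: "real \<Rightarrow> nat list \<Rightarrow> real" where
  "Y k ps = cc k (length ps) * ph (Mx ps)"

lemma ph_pos: "ph m > 0"
  by (induction m) auto

lemma ph_Suc_le: "ph (Suc m) \<le> ph m"
proof -
  have "(2 * real m + 1) / (2 * real m + 2) \<le> 1" by simp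
  then have "ph m * ((2 * real m + 1) / (2 * real m + 2)) \<le> ph m * 1"
    using ph_pos[of m] by (intro mult_left_mono) auto
  then show ?thesis by simp
qed

lemma ph_antimono: "m \<le> m' \<Longrightarrow> ph m' \<le> ph m"
proof (induction m' rule: dec_induct)
  case base then show ?case by simp
next
  case (step n) then show ?case using ph_Suc_le[of n] by linarith
qed

lemma ph_Suc_eq: "ph (Suc m) = ph m - ph m / (2 * (real m + 1))"
  by (simp add: field_simps)

lemma ph_sq: "ph m ^ 2 * (4 * real m + 1) \<ge> 1"
proof (induction m)
  case 0 then show ?case by simp
next
  case (Suc m)
  have key: "(2 * real m + 1)^2 * (4 * real m + 5) \<ge> (2 * real m + 2)^2 * (4 * real m + 1)"
    by (simp add: power2_eq_square algebra_simps)
  have "ph (Suc m) ^ 2 * (4 * real (Suc m) + 1) =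
      ph m ^ 2 * ((2 * real m + 1)^2 * (4 * real m + 5)) / (2 * real m + 2)^2"
    by (simp add: power2_eq_square field_simps)
  also have "\<dots> \<ge> ph m ^ 2 * ((2 * real m + 2)^2 * (4 * real m + 1)) / (2 * real m + 2)^2"
    using key by (intro divide_right_mono mult_left_mono) auto
  also have "ph m ^ 2 * ((2 * real m + 2)^2 * (4 * real m + 1)) / (2 * real m + 2)^2 = ph m ^ 2 * (4 * real m + 1)"
    by (simp add: field_simps)
  finally show ?case using Suc.IH by linarith
qed

lemma x_bounds: assumes "k \<ge> 1" shows "0 < 1 / (2 * k * (2 * real n + 1))" "1 / (2 * k * (2 * real n + 1)) \<le> 1/2"
proof -
  show "0 < 1 / (2 * k * (2 * real n + 1))" using assms by simp
  have "2 \<le> 2 * k * (2 * real n + 1)"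
  proof -
    have "k * 1 \<le> k * (2 * real n + 1)" using assms by (intro mult_left_mono) auto
    then have "1 \<le> k * (2 * real n + 1)" using assms by linarith
    then show ?thesis by linarith
  qed
  then show "1 / (2 * k * (2 * real n + 1)) \<le> 1/2" by (simp add: field_simps)
qed

lemma cc_pos: assumes "k \<ge> 1" shows "cc k n > 0"
proof (induction n)
  case 0 then show ?case by simp
next
  case (Suc n)
  have "0 < 1 - 1 / (2 * k * (2 * real n + 1))" using x_bounds(2)[OF assms, of n] by linarith
  then show ?case using Suc by (simp only: cc.simps) (rule divide_pos_pos)
qed

lemma cc_lower: assumes k: "k \<ge> 1" shows "cc k n \<ge> exp (1 / (4 * k) * ln (real n + 1))"
proof (induction n)
  case 0 then show ?case by simp
next
  case (Suc n)
  define x where "x = 1 / (2 * k * (2 * real n + 1))"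
  have x0: "0 < x" "x \<le> 1/2" using x_bounds[OF k, of n] by (auto simp: x_def)
  have lnb: "ln (real n + 2) \<le> ln (real n + 1) + 1 / (real n + 1)"
  proof -
    have e: "real n + 2 = (real n + 1) * (1 + 1 / (real n + 1))" by (simp add: field_simps)
    have "ln (real n + 2) = ln (real n + 1) + ln (1 + 1 / (real n + 1))"
    proof -
      have "ln (real n + 2) = ln ((real n + 1) * (1 + 1 / (real n + 1)))" using e by (rule arg_cong)
      also have "\<dots> = ln (real n + 1) + ln (1 + 1 / (real n + 1))"
        by (rule ln_mult_pos) (auto simp: add_pos_pos)
      finally show ?thesis .
    qed
    also have "ln (1 + 1 / (real n + 1)) \<le> 1 / (real n + 1)"
      by (rule ln_add_one_self_le_self) simp
    finally show ?thesis by simp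
  qed
  have "1 / (4 * k) * (1 / (real n + 1)) \<le> x"
  proof -
    have a: "1 / (4 * k) * (1 / (real n + 1)) = 1 / (4 * k * (real n + 1))" by simp
    have b: "2 * k * (2 * real n + 1) \<le> 4 * k * (real n + 1)" using k by (simp add: algebra_simps)
    have "1 / (4 * k * (real n + 1)) \<le> 1 / (2 * k * (2 * real n + 1))"
      by (rule divide_left_mono[OF b]) (use k in auto)
    then show ?thesis using a by (simp add: x_def)
  qed
  then have "1 / (4 * k) * ln (real n + 2) \<le> 1 / (4 * k) * ln (real n + 1) + x"
    using lnb k by (smt (verit, ccfv_SIG) divide_nonneg_nonneg mult_left_mono distrib_left)
  then have "exp (1 / (4 * k) * ln (real n + 2)) \<le> exp (1 / (4 * k) * ln (real n + 1)) * exp x"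
    by (simp add: exp_add[symmetric])
  also have "\<dots> \<le> cc k n * exp x" using Suc.IH by simp
  also have "exp x \<le> 1 / (1 - x)"
  proof -
    have "1 - x \<le> exp (- x)" using exp_ge_add_one_self[of "-x"] by simp
    then have "(1 - x) * exp x \<le> exp (-x) * exp x" by (intro mult_right_mono) auto
    then have "(1 - x) * exp x \<le> 1" by (simp add: exp_minus field_simps)
    then show ?thesis using x0 by (simp add: field_simps)
  qed
  then have "cc k n * exp x \<le> cc k n * (1 / (1 - x))" using cc_pos[OF k, of n] by (intro mult_left_mono) auto
  finally show ?case by (simp add: x_def add.commute)
qed




lemma supermart:
  fixes f :: "nat \<Rightarrow> real" and k :: real
  assumes fpos: "\<And>n. f n > 0"
    and k1: "k \<ge> 1"
    and growth: "\<And>n i. i \<le> n \<Longrightarrow> f i / (real i + 1) \<le> k * f n / (real n + 1)"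
    and v: "valid ps"
  shows "(\<Sum>j\<le>length ps. (f (outdeg ps j) / pa_Z f ps) * Y k (ps @ [j])) \<le> Y k ps"
proof -
  define n where "n = length ps"
  define M where "M = Mx ps"
  define Z where "Z = pa_Z f ps"
  define p where "p j = f (outdeg ps j) / Z" for j
  define x where "x = 1 / (2 * k * (2 * real n + 1))"
  have Z: "Z > 0" using Z_pos[of f ps] fpos by (simp add: Z_def)
  have p0: "p j \<ge> 0" for j using Z fpos[of "outdeg ps j"] by (simp add: p_def)
  obtain u where u: "u \<le> n" "outdeg ps u = M" using Mx_in[of ps] by (auto simp: n_def M_def)
  have sump: "(\<Sum>j\<le>n. p j) = 1"
    using Z by (simp add: p_def sum_divide_distrib[symmetric] Z_def pa_Z_def n_def)
  have dle: "outdeg ps j \<le> M" if "j \<le> n" for j using outdeg_le_Mx[of j ps] that by (simp add: n_def M_def)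
  have h2: "ph (Mx (ps @ [j])) \<le> ph M - (if j = u then ph M / (2 * (real M + 1)) else 0)"
    if j: "j \<le> n" for j
  proof (cases "j = u")
    case True
    have "Suc M \<le> Mx (ps @ [j])" using Mx_snoc_ge[of u ps j] u True by (simp add: n_def)
    then have "ph (Mx (ps @ [j])) \<le> ph (Suc M)" by (rule ph_antimono)
    then show ?thesis using True ph_Suc_eq[of M] by simp
  next
    case False
    have "M \<le> Mx (ps @ [j])" using Mx_mono[of ps j] by (simp add: M_def)
    then show ?thesis using False ph_antimono by simp
  qed
  have h3: "(\<Sum>j\<le>n. p j * ph (Mx (ps @ [j]))) \<le> (\<Sum>j\<le>n. p j * (ph M - (if j = u then ph M / (2 * (real M + 1)) else 0)))"
    using h2 p0 by (intro sum_mono mult_left_mono) auto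
  also have "\<dots> = ph M * (\<Sum>j\<le>n. p j) - (\<Sum>j\<le>n. if j = u then p j * (ph M / (2 * (real M + 1))) else 0)"
  proof -
    have "(\<Sum>j\<le>n. p j * (ph M - (if j = u then ph M / (2 * (real M + 1)) else 0))) =
      (\<Sum>j\<le>n. ph M * p j - (if j = u then p j * (ph M / (2 * (real M + 1))) else 0))"
      by (intro sum.cong refl) (auto simp: algebra_simps)
    also have "\<dots> = ph M * (\<Sum>j\<le>n. p j) - (\<Sum>j\<le>n. if j = u then p j * (ph M / (2 * (real M + 1))) else 0)"
      by (simp only: sum_subtractf sum_distrib_left)
    finally show ?thesis .
  qed
  also have "\<dots> = ph M - p u * (ph M / (2 * (real M + 1)))"
    using u sump by (simp add: sum.delta)
  finally have h3': "(\<Sum>j\<le>n. p j * ph (Mx (ps @ [j]))) \<le> ph M - p u * (ph M / (2 * (real M + 1)))" .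
  have h4: "Z \<le> k * f M / (real M + 1) * (2 * real n + 1)"
  proof -
    have "Z = (\<Sum>j\<le>n. (real (outdeg ps j) + 1) * (f (outdeg ps j) / (real (outdeg ps j) + 1)))"
      by (simp add: Z_def pa_Z_def n_def)
    also have "\<dots> \<le> (\<Sum>j\<le>n. (real (outdeg ps j) + 1) * (k * f M / (real M + 1)))"
      using growth dle by (intro sum_mono mult_left_mono) auto
    also have "\<dots> = k * f M / (real M + 1) * (\<Sum>j\<le>n. (real (outdeg ps j) + 1))"
      by (simp add: sum_distrib_left mult.commute)
    also have "(\<Sum>j\<le>n. (real (outdeg ps j) + 1)) = 2 * real n + 1"
    proof -
      have "(\<Sum>j\<le>n. outdeg ps j) = n" using v unfolding n_def valid_def by (intro sum_outdeg) auto
      then have "(\<Sum>j\<le>n. real (outdeg ps j)) = real n" by (metis of_nat_sum)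
      then show ?thesis by (simp add: sum.distrib)
    qed
    finally show ?thesis .
  qed
  have h5: "p u * (ph M / (2 * (real M + 1))) \<ge> ph M * x"
  proof -
    have fM: "f M > 0" by (rule fpos)
    have A: "k * f M / (real M + 1) * (2 * real n + 1) = f M * ((k * (2 * real n + 1)) / (real M + 1))"
      by (simp add: field_simps)
    have B: "f M / (f M * ((k * (2 * real n + 1)) / (real M + 1))) = 1 / ((k * (2 * real n + 1)) / (real M + 1))"
      using fM by (intro nonzero_divide_mult_cancel_left) simp
    have "(real M + 1) / (k * (2 * real n + 1)) = f M / (k * f M / (real M + 1) * (2 * real n + 1))"
      unfolding A B by simp
    also have "\<dots> \<le> f M / Z"
    proof (rule divide_left_mono[OF h4])
      have pos: "0 < k * f M / (real M + 1) * (2 * real n + 1)" using k1 fM by simp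
      show "0 \<le> f M" using fM by simp
      show "0 < k * f M / (real M + 1) * (2 * real n + 1) * Z" using pos Z by (rule mult_pos_pos)
    qed
    finally have pu: "(real M + 1) / (k * (2 * real n + 1)) \<le> p u" using u by (simp add: p_def)
    have kn: "k * (2 * real n + 1) > 0" using k1 by simp
    have k0: "k \<noteq> 0" "2 * real n + 1 \<noteq> 0" "k * (2 * real n + 1) \<noteq> 0" "k * (2 * real n + 1) * (2 * (real M + 1)) \<noteq> 0" using kn k1 by auto
    have "ph M * x = (real M + 1) / (k * (2 * real n + 1)) * (ph M / (2 * (real M + 1)))"
      unfolding x_def using k0 by (simp add: field_simps)
    also have "\<dots> \<le> p u * (ph M / (2 * (real M + 1)))"
      using pu ph_pos[of M] by (intro mult_right_mono) auto
    finally show ?thesis .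
  qed
  have x1: "x < 1" using x_bounds[OF k1, of n] by (simp add: x_def)
  have ccS0: "cc k (Suc n) = cc k n / (1 - x)" by (simp add: x_def)
  have ccS: "cc k (Suc n) * (1 - x) = cc k n" unfolding ccS0 using x1 by simp
  have "(\<Sum>j\<le>length ps. (f (outdeg ps j) / pa_Z f ps) * Y k (ps @ [j]))
      = cc k (Suc n) * (\<Sum>j\<le>n. p j * ph (Mx (ps @ [j])))"
    by (simp add: Y_def p_def Z_def n_def sum_distrib_left mult_ac del: cc.simps)
  also have "\<dots> \<le> cc k (Suc n) * (ph M * (1 - x))"
    using h3' h5 cc_pos[OF k1, of "Suc n"] by (intro mult_left_mono) (auto simp: algebra_simps)
  also have "\<dots> = cc k n * ph M" by (metis ccS mult.commute mult.left_commute)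
  also have "\<dots> = Y k ps" by (simp add: Y_def n_def M_def)
  finally show ?thesis .
qed




lemma prob_unif: "prob_space unif_seq"
  unfolding unif_seq_M0 by (rule prob_space_PiM) (rule prob_M0)

lemma ex_le_Suc: "(\<exists>m\<le>Suc K. Q m) \<longleftrightarrow> Q 0 \<or> (\<exists>m\<le>K. Q (Suc m))"
proof
  assume "\<exists>m\<le>Suc K. Q m"
  then obtain m where "m \<le> Suc K" "Q m" by blast
  then show "Q 0 \<or> (\<exists>m\<le>K. Q (Suc m))" by (cases m) auto
next
  assume "Q 0 \<or> (\<exists>m\<le>K. Q (Suc m))"
  then show "\<exists>m\<le>Suc K. Q m" using Suc_le_mono le0 by blast
qed

lemma Y_nonneg: "k \<ge> 1 \<Longrightarrow> Y k ps \<ge> 0"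
  unfolding Y_def using cc_pos[of k "length ps"] ph_pos[of "Mx ps"] by simp

lemma doob:
  fixes f :: "nat \<Rightarrow> real" and k :: real and lam :: real
  assumes fpos: "\<And>n. f n > 0"
    and k1: "k \<ge> 1"
    and growth: "\<And>n i. i \<le> n \<Longrightarrow> f i / (real i + 1) \<le> k * f n / (real n + 1)"
    and lam: "lam > 0"
    and BY: "\<And>s. valid s \<Longrightarrow> B s \<Longrightarrow> Y k s \<ge> lam"
  shows "valid ps \<Longrightarrow> emeasure unif_seq {U. \<exists>m\<le>K. B (tf f ps U m)} \<le> ennreal (Y k ps / lam)"
proof (induction K arbitrary: ps)
  have one: "emeasure unif_seq A \<le> 1" for A using prob_space.emeasure_le_1[OF prob_unif] by simp
  have bad: "emeasure unif_seq A \<le> ennreal (Y k ps / lam)" if "valid ps" "B ps" for A ps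
  proof -
    have "1 \<le> Y k ps / lam" using BY[OF that] lam by simp
    then have h: "ennreal 1 \<le> ennreal (Y k ps / lam)" by (rule ennreal_leI)
    have "emeasure unif_seq A \<le> ennreal 1" using one[of A] by simp
    then show ?thesis using h by (rule order_trans)
  qed
  {
    case 0
    show ?case
    proof (cases "B ps")
      case True then show ?thesis by (rule bad[OF 0])
    next
      case False then show ?thesis by simp
    qed
  next
    case (Suc K)
    show ?case
    proof (cases "B ps")
      case True then show ?thesis by (rule bad[OF Suc.prems])
    next
      case False
      define P where "P x V \<longleftrightarrow> (\<exists>m\<le>K. B (tf f (ps @ [pa_choose f ps x]) V m))" for x V
      have seteq: "{U. \<exists>m\<le>Suc K. B (tf f ps U m)} = {U. P (U 0) (\<lambda>i. U (Suc i))}"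
        using False by (simp add: ex_le_Suc P_def)
      have "emeasure unif_seq {U. \<exists>m\<le>Suc K. B (tf f ps U m)} = (\<integral>\<^sup>+x. emeasure unif_seq {U. P x U} \<partial>M0)"
        unfolding seteq by (rule emeasure_shift) (unfold seteq[symmetric], rule sets_tf)
      also have "\<dots> \<le> (\<integral>\<^sup>+x. ennreal (Y k (ps @ [pa_choose f ps x]) / lam) \<partial>M0)"
      proof (rule nn_integral_mono_AE)
        have AE: "AE x in M0. x \<in> {0..<1}"
          unfolding M0_def by (rule AE_uniform_measureI) auto
        show "AE x in M0. emeasure unif_seq {U. P x U} \<le> ennreal (Y k (ps @ [pa_choose f ps x]) / lam)"
        proof (rule AE_mp[OF AE], intro AE_I2 impI)
          fix x :: real assume x: "x \<in> {0..<1}"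
          have "valid (ps @ [pa_choose f ps x])" using valid_step[of f ps x] fpos Suc.prems x by auto
          then show "emeasure unif_seq {U. P x U} \<le> ennreal (Y k (ps @ [pa_choose f ps x]) / lam)"
            unfolding P_def by (rule Suc.IH)
        qed
      qed
      also have "\<dots> = (\<Sum>j\<le>length ps. ennreal (f (outdeg ps j) / pa_Z f ps) * ennreal (Y k (ps @ [j]) / lam))"
        by (rule step_integral[where h = "\<lambda>j. ennreal (Y k (ps @ [j]) / lam)", OF fpos])
      also have "\<dots> = ennreal (\<Sum>j\<le>length ps. (f (outdeg ps j) / pa_Z f ps) * (Y k (ps @ [j]) / lam))"
      proof -
        have nn: "0 \<le> f (outdeg ps j) / pa_Z f ps" for j
          using fpos[of "outdeg ps j"] Z_pos[of f ps, OF fpos] by (intro divide_nonneg_nonneg) auto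
        have nn2: "0 \<le> Y k (ps @ [j]) / lam" for j using Y_nonneg[OF k1] lam by simp
        have "(\<Sum>j\<le>length ps. ennreal (f (outdeg ps j) / pa_Z f ps) * ennreal (Y k (ps @ [j]) / lam))
          = (\<Sum>j\<le>length ps. ennreal ((f (outdeg ps j) / pa_Z f ps) * (Y k (ps @ [j]) / lam)))"
          by (intro sum.cong refl, rule ennreal_mult[symmetric, OF nn nn2])
        also have "\<dots> = ennreal (\<Sum>j\<le>length ps. (f (outdeg ps j) / pa_Z f ps) * (Y k (ps @ [j]) / lam))"
          by (rule sum_ennreal) (intro mult_nonneg_nonneg nn nn2)
        finally show ?thesis .
      qed
      also have "\<dots> \<le> ennreal (Y k ps / lam)"
      proof (rule ennreal_leI)
        have "(\<Sum>j\<le>length ps. (f (outdeg ps j) / pa_Z f ps) * (Y k (ps @ [j]) / lam))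
            = (\<Sum>j\<le>length ps. (f (outdeg ps j) / pa_Z f ps) * Y k (ps @ [j])) / lam"
          by (simp add: sum_divide_distrib)
        also have "\<dots> \<le> Y k ps / lam"
          using supermart[OF fpos k1 growth Suc.prems] lam by (simp add: divide_right_mono)
        finally show "(\<Sum>j\<le>length ps. (f (outdeg ps j) / pa_Z f ps) * (Y k (ps @ [j]) / lam)) \<le> Y k ps / lam" .
      qed
      finally show ?thesis .
    qed
  }
qed




lemma Mx_nil: "Mx [] = 0" by (simp add: Mx_def outdeg_def)

lemma Y_nil: "Y k [] = 1" by (simp add: Y_def Mx_nil)

theorem lemma3p12:
  fixes f :: "nat \<Rightarrow> real" and \<kappa> :: real
  assumes fpos: "\<And>n. f n > 0"
    and kpos: "\<kappa> > 0"
    and growth: "\<And>n i. i \<le> n \<Longrightarrow> f i / (real i + 1) \<le> \<kappa> * f n / (real n + 1)"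
  shows "\<forall>\<epsilon>>0. \<exists>r>0.
    measure unif_seq {U \<in> space unif_seq. \<forall>n\<ge>1.
        real (max_outdeg f U n) * real n powr (- 1 / (2 * \<kappa>)) \<ge> r} \<ge> 1 - \<epsilon>"
proof (intro allI impI)
  fix \<epsilon> :: real assume e0: "\<epsilon> > 0"
  interpret P: prob_space unif_seq by (rule prob_unif)
  have k1: "\<kappa> \<ge> 1"
  proof -
    have "f 0 / (real 0 + 1) \<le> \<kappa> * f 0 / (real 0 + 1)" by (rule growth) simp
    then have "f 0 * 1 \<le> f 0 * \<kappa>" by (simp add: mult.commute)
    then show ?thesis using fpos[of 0] by (simp add: mult_le_cancel_left_pos)
  qed
  show "\<exists>r>0. measure unif_seq {U \<in> space unif_seq. \<forall>n\<ge>1.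
        real (max_outdeg f U n) * real n powr (- 1 / (2 * \<kappa>)) \<ge> r} \<ge> 1 - \<epsilon>"
  proof (cases "\<epsilon> \<ge> 1")
    case True
    show ?thesis
    proof (intro exI[of _ 1] conjI)
      have "1 - \<epsilon> \<le> 0" using True by simp
      then show "1 - \<epsilon> \<le> measure unif_seq {U \<in> space unif_seq. \<forall>n\<ge>1.
        real (max_outdeg f U n) * real n powr (- 1 / (2 * \<kappa>)) \<ge> 1}"
        using measure_nonneg order_trans by blast
    qed simp
  next
    case False
    then have e1: "\<epsilon> < 1" by simp
    define r where "r = \<epsilon>^2 / 5"
    define a where "a = 1 / (2 * \<kappa>)"
    have r0: "r > 0" using e0 by (simp add: r_def)
    define B where "B s \<longleftrightarrow> length s \<ge> 1 \<and> real (Mx s) * real (length s) powr (- 1 / (2 * \<kappa>)) < r" for s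
    have BY: "1 / \<epsilon> \<le> Y \<kappa> s" if v: "valid s" and Bs: "B s" for s
    proof -
      define n where "n = length s"
      define M where "M = Mx s"
      have n1: "n \<ge> 1" using Bs by (simp add: B_def n_def)
      have M1: "M \<ge> 1" using Mx_pos[OF v] n1 by (simp add: M_def n_def)
      have na: "real n powr a > 0" using n1 by simp
      have "- 1 / (2 * \<kappa>) = - a" by (simp add: a_def)
      then have "real n powr (- 1 / (2 * \<kappa>)) = inverse (real n powr a)" by (simp add: powr_minus)
      then have "real M * inverse (real n powr a) < r" using Bs by (simp add: B_def M_def n_def)
      then have "real M < r * real n powr a" using na by (simp add: field_simps)
      then have M5: "5 * real M < \<epsilon>^2 * real n powr a" by (simp add: r_def)
      have "ph M ^ 2 * (4 * real M + 1) \<ge> 1" by (rule ph_sq)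
      moreover have "ph M ^ 2 * (4 * real M + 1) \<le> ph M ^ 2 * (5 * real M)"
        using M1 by (intro mult_left_mono) auto
      moreover have "ph M ^ 2 * (5 * real M) < ph M ^ 2 * (\<epsilon>^2 * real n powr a)"
        using M5 ph_pos[of M] by (intro mult_strict_left_mono) auto
      ultimately have ph1: "1 < ph M ^ 2 * (\<epsilon>^2 * real n powr a)" by linarith
      have ccl: "cc \<kappa> n \<ge> exp (1 / (4 * \<kappa>) * ln (real n))"
      proof -
        have "ln (real n) \<le> ln (real n + 1)" using n1 by simp
        then have "1 / (4 * \<kappa>) * ln (real n) \<le> 1 / (4 * \<kappa>) * ln (real n + 1)"
          using k1 by (intro mult_left_mono) auto
        then have "exp (1 / (4 * \<kappa>) * ln (real n)) \<le> exp (1 / (4 * \<kappa>) * ln (real n + 1))" by simp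
        then show ?thesis using cc_lower[OF k1, of n] by linarith
      qed
      have "exp (1 / (4 * \<kappa>) * ln (real n)) ^ 2 = real n powr a"
      proof -
        have "exp (1 / (4 * \<kappa>) * ln (real n)) ^ 2 = exp (2 * (1 / (4 * \<kappa>) * ln (real n)))"
          by (rule exp_double[symmetric])
        also have "\<dots> = exp (a * ln (real n))" by (simp add: a_def)
        also have "\<dots> = real n powr a" using n1 by (simp add: powr_def)
        finally show ?thesis .
      qed
      moreover have "exp (1 / (4 * \<kappa>) * ln (real n)) ^ 2 \<le> cc \<kappa> n ^ 2"
        by (rule power_mono[OF ccl]) simp
      ultimately have cc2: "cc \<kappa> n ^ 2 \<ge> real n powr a" by simp
      have "1 < ph M ^ 2 * (\<epsilon>^2 * cc \<kappa> n ^ 2)"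
      proof -
        have "ph M ^ 2 * (\<epsilon>^2 * real n powr a) \<le> ph M ^ 2 * (\<epsilon>^2 * cc \<kappa> n ^ 2)"
          using cc2 by (intro mult_left_mono) auto
        then show ?thesis using ph1 by linarith
      qed
      moreover have "Y \<kappa> s ^ 2 = ph M ^ 2 * cc \<kappa> n ^ 2"
        by (simp add: Y_def M_def n_def power_mult_distrib)
      ultimately have "1 < Y \<kappa> s ^ 2 * \<epsilon>^2" by (simp add: mult_ac)
      then have "(1 / \<epsilon>) ^ 2 < Y \<kappa> s ^ 2"
        using e0 by (simp add: power_divide divide_less_eq)
      then have "1 / \<epsilon> < Y \<kappa> s" by (rule power_less_imp_less_base) (rule Y_nonneg[OF k1])
      then show ?thesis by simp
    qed
    define A where "A K = {U. \<exists>m\<le>K. B (tf f [] U m)}" for K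
    have AK: "emeasure unif_seq (A K) \<le> ennreal \<epsilon>" for K
    proof -
      have "emeasure unif_seq (A K) \<le> ennreal (Y \<kappa> [] / (1 / \<epsilon>))"
        unfolding A_def by (rule doob[OF fpos k1 growth _ BY]) (use e0 in \<open>auto simp: valid_def\<close>)
      then show ?thesis by (simp add: Y_nil)
    qed
    have Asets: "A K \<in> sets unif_seq" for K unfolding A_def by (rule sets_tf)
    have "emeasure unif_seq (\<Union>K. A K) = (SUP K. emeasure unif_seq (A K))"
    proof (rule SUP_emeasure_incseq[symmetric])
      show "range A \<subseteq> sets unif_seq" using Asets by blast
      show "incseq A" by (rule incseq_SucI) (auto simp: A_def intro: le_SucI)
    qed
    also have "\<dots> \<le> ennreal \<epsilon>" using AK by (rule SUP_least)
    finally have U: "emeasure unif_seq (\<Union>K. A K) \<le> ennreal \<epsilon>" .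
    have mU: "measure unif_seq (\<Union>K. A K) \<le> \<epsilon>"
      using U e0 by (simp add: P.emeasure_eq_measure)
    have comp: "{U \<in> space unif_seq. \<forall>n\<ge>1.
        real (max_outdeg f U n) * real n powr (- 1 / (2 * \<kappa>)) \<ge> r} = space unif_seq - (\<Union>K. A K)"
    proof -
      have md: "max_outdeg f U n = Mx (pa_tree f U n)" for U n
        by (simp add: max_outdeg_def Mx_def pa_tree_tf)
      have ln: "length (pa_tree f U n) = n" for U n by (simp add: pa_tree_tf)
      have mem: "U \<in> (\<Union>K. A K) \<longleftrightarrow> (\<exists>n\<ge>1. real (max_outdeg f U n) * real n powr (- 1 / (2 * \<kappa>)) < r)" for U
      proof -
        have "U \<in> (\<Union>K. A K) \<longleftrightarrow> (\<exists>m. B (pa_tree f U m))"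
          unfolding A_def pa_tree_tf by blast
        also have "\<dots> \<longleftrightarrow> (\<exists>n\<ge>1. real (max_outdeg f U n) * real n powr (- 1 / (2 * \<kappa>)) < r)"
          by (simp only: B_def md ln)
        finally show ?thesis .
      qed
      show ?thesis
      proof (rule set_eqI)
        fix U
        have "U \<in> {U \<in> space unif_seq. \<forall>n\<ge>1.
          real (max_outdeg f U n) * real n powr (- 1 / (2 * \<kappa>)) \<ge> r} \<longleftrightarrow>
          (\<forall>n\<ge>1. real (max_outdeg f U n) * real n powr (- 1 / (2 * \<kappa>)) \<ge> r)"
          by simp
        also have "\<dots> \<longleftrightarrow>
          \<not> (\<exists>n\<ge>1. real (max_outdeg f U n) * real n powr (- 1 / (2 * \<kappa>)) < r)"
          by (meson not_le)
        also have "\<dots> \<longleftrightarrow> U \<notin> (\<Union>K. A K)" using mem[of U] by blast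
        also have "\<dots> \<longleftrightarrow> U \<in> space unif_seq - (\<Union>K. A K)" by simp
        finally show "U \<in> {U \<in> space unif_seq. \<forall>n\<ge>1.
          real (max_outdeg f U n) * real n powr (- 1 / (2 * \<kappa>)) \<ge> r} \<longleftrightarrow>
          U \<in> space unif_seq - (\<Union>K. A K)" .
      qed
    qed
    have "measure unif_seq (space unif_seq - (\<Union>K. A K)) = 1 - measure unif_seq (\<Union>K. A K)"
      by (rule P.prob_compl) (use Asets in auto)
    note pc = this
    show ?thesis
    proof (intro exI[of _ r] conjI)
      show "0 < r" by (rule r0)
      show "1 - \<epsilon> \<le> measure unif_seq {U \<in> space unif_seq. \<forall>n\<ge>1.
        real (max_outdeg f U n) * real n powr (- 1 / (2 * \<kappa>)) \<ge> r}"
        unfolding comp pc using mU by linarith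
    qed
  qed
qed


end
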